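(* Let $\mathcal{K}$ be a field of characteristic zero, let $c\in\mathcal{K}[x_1,\dots,x_n]$ be nonconstant, let $y_1\in\mathcal{K}[x_1,\dots,x_n]$, and let $u_1,\dots,u_n$ be new variables; write $\underline{x}=(x_1,\dots,x_n)$, $\underline{u}=(u_1,\dots,u_n)$. Then the following are equivalent: (i) $c(\underline{x})=\ell(y_1(\underline{x}))$ for some univariate polynomial $\ell$ over $\mathcal{K}$, and $y_1$ is a coordinate of $\mathcal{K}[x_1,\dots,x_n]$; (ii) $y_1(\underline{x})-y_1(\underline{u})$ divides $c(\underline{x})-c(\underline{u})$ in $\mathcal{K}[\underline{u},\underline{x}]$, and $y_1$ is a coordinate of $\mathcal{K}[x_1,\dots,x_n]$.
   Context: A polynomial $y_1\in\mathcal{K}[x_1,\dots,x_n]$ is a coordinate if there exist $y_2,\dots,y_n$ with $\mathcal{K}[x_1,\dots,x_n]=\mathcal{K}[y_1,y_2,\dots,y_n]$. *)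

theory Defs
  imports "HOL-Library.Poly_Mapping" "HOL-Computational_Algebra.Polynomial"
begin

text \<open>Multivariate polynomials over a field: finitely supported maps from monomials
(finitely supported exponent vectors, variables indexed by nat) to coefficients.\<close>
type_synonym 'a mpoly = "(nat \<Rightarrow>\<^sub>0 nat) \<Rightarrow>\<^sub>0 'a"

definition mconst :: "'a::zero \<Rightarrow> 'a mpoly" where
  "mconst a = Poly_Mapping.single 0 a"

definition mvar :: "nat \<Rightarrow> 'a::{zero,one} mpoly" where
  "mvar i = Poly_Mapping.single (Poly_Mapping.single i 1) 1"

definition mvars :: "'a::zero mpoly \<Rightarrow> nat set" where
  "mvars p = (\<Union>m\<in>Poly_Mapping.keys p. Poly_Mapping.keys m)"

definition polys_in :: "nat set \<Rightarrow> 'a::zero mpoly set" where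
  "polys_in V = {p. mvars p \<subseteq> V}"

definition msubst :: "(nat \<Rightarrow> 'a::comm_ring_1 mpoly) \<Rightarrow> 'a mpoly \<Rightarrow> 'a mpoly" where
  "msubst \<sigma> p = (\<Sum>m\<in>Poly_Mapping.keys p. mconst (Poly_Mapping.lookup p m) * (\<Prod>i\<in>Poly_Mapping.keys m. \<sigma> i ^ Poly_Mapping.lookup m i))"

definition ucomp :: "'a::comm_ring_1 poly \<Rightarrow> 'a mpoly \<Rightarrow> 'a mpoly" where
  "ucomp l y = (\<Sum>k\<le>degree l. mconst (coeff l k) * y ^ k)"

text \<open>y1 is a coordinate of K[x_0..x_{n-1}]: there are y_2..y_n in K[x] with
  K[x] = K[y_1,...,y_n], i.e. every x_i is a polynomial expression in the y's.\<close>
definition is_coordinate :: "nat \<Rightarrow> 'a::comm_ring_1 mpoly \<Rightarrow> bool" where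
  "is_coordinate n y1 \<longleftrightarrow> 0 < n \<and>
     (\<exists>ys. ys 0 = y1 \<and> (\<forall>i<n. ys i \<in> polys_in {..<n}) \<and>
        (\<forall>i<n. \<exists>q \<in> polys_in {..<n}. msubst ys q = mvar i))"

text \<open>Shift variables x_i to u_i := x_{n+i}.\<close>
definition shiftvars :: "nat \<Rightarrow> 'a::comm_ring_1 mpoly \<Rightarrow> 'a mpoly" where
  "shiftvars n p = msubst (\<lambda>i. mvar (n + i)) p"

end

theory Submission
  imports Defs "Jordan_Normal_Form.Determinant"
begin


abbreviation lk where "lk \<equiv> Poly_Mapping.lookup"
abbreviation ks where "ks \<equiv> Poly_Mapping.keys"
abbreviation sg where "sg \<equiv> Poly_Mapping.single"

definition mono :: "(nat \<Rightarrow> 'a::comm_ring_1 mpoly) \<Rightarrow> (nat \<Rightarrow>\<^sub>0 nat) \<Rightarrow> 'a mpoly" where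
  "mono \<sigma> m = (\<Prod>i\<in>ks m. \<sigma> i ^ lk m i)"

lemma msubst_mono: "msubst \<sigma> p = (\<Sum>m\<in>ks p. mconst (lk p m) * mono \<sigma> m)"
  unfolding msubst_def mono_def ..

lemma mconst_0[simp]: "mconst 0 = 0" by (simp add: mconst_def)
lemma mconst_1[simp]: "mconst 1 = 1" by (simp add: mconst_def)
lemma mconst_add: "mconst (a + b) = mconst a + mconst b" by (simp add: mconst_def single_add)
lemma mconst_diff: "mconst (a - b) = mconst a - (mconst b :: 'a::ab_group_add mpoly)"
  by (simp add: mconst_def single_diff)
lemma mconst_mult: "mconst (a * b) = mconst a * (mconst b :: 'a::comm_ring_1 mpoly)"
  by (simp add: mconst_def mult_single)
lemma mconst_inj: "mconst a = mconst b \<longleftrightarrow> a = b"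
  unfolding mconst_def by (metis lookup_single_eq)
lemma mconst_sum: "mconst (sum f S) = (\<Sum>x\<in>S. mconst (f x) :: 'a::comm_ring_1 mpoly)"
  by (induction S rule: infinite_finite_induct) (auto simp: mconst_add)

lemma mono_superset:
  assumes "finite S" "ks m \<subseteq> S"
  shows "mono \<sigma> m = (\<Prod>i\<in>S. \<sigma> i ^ lk m i)"
  unfolding mono_def
  by (rule prod.mono_neutral_left) (use assms in \<open>auto simp: in_keys_iff\<close>)

lemma mono_0[simp]: "mono \<sigma> 0 = 1" by (simp add: mono_def)

lemma mono_add: "mono \<sigma> (m + m') = mono \<sigma> m * mono \<sigma> m'"
proof -
  let ?S = "ks m \<union> ks m'"
  have f: "finite ?S" by simp
  have "mono \<sigma> (m + m') = (\<Prod>i\<in>?S. \<sigma> i ^ lk (m + m') i)"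
    by (rule mono_superset[OF f])
    (rule keys_add)
  also have "\<dots> = (\<Prod>i\<in>?S. \<sigma> i ^ lk m i * \<sigma> i ^ lk m' i)"
    by (simp add: lookup_add power_add)
  also have "\<dots> = mono \<sigma> m * mono \<sigma> m'"
    by (simp add: prod.distrib mono_superset[OF f])
  finally show ?thesis .
qed

lemma msubst_superset:
  assumes "finite S" "ks p \<subseteq> S"
  shows "msubst \<sigma> p = (\<Sum>m\<in>S. mconst (lk p m) * mono \<sigma> m)"
  unfolding msubst_mono
  by (rule sum.mono_neutral_left) (use assms in \<open>auto simp: in_keys_iff\<close>)

lemma msubst_0[simp]: "msubst \<sigma> 0 = 0" by (simp add: msubst_def)

lemma msubst_add: "msubst \<sigma> (p + q) = msubst \<sigma> p + msubst \<sigma> q"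
proof -
  let ?S = "ks p \<union> ks q"
  have f: "finite ?S" by simp
  have "msubst \<sigma> (p + q) = (\<Sum>m\<in>?S. mconst (lk (p+q) m) * mono \<sigma> m)"
    by (rule msubst_superset[OF f])
    (rule keys_add)
  also have "\<dots> = msubst \<sigma> p + msubst \<sigma> q"
    by (simp add: lookup_add mconst_add distrib_right sum.distrib msubst_superset[OF f])
  finally show ?thesis .
qed

lemma msubst_uminus: "msubst \<sigma> (- p) = - msubst \<sigma> p"
  using msubst_add[of \<sigma> p "-p"] by (metis add.right_inverse msubst_0 minus_unique)

lemma msubst_diff: "msubst \<sigma> (p - q) = msubst \<sigma> p - msubst \<sigma> q"
  using msubst_add[of \<sigma> p "-q"] by (simp add: msubst_uminus)

lemma msubst_sum: "msubst \<sigma> (sum f S) = (\<Sum>x\<in>S. msubst \<sigma> (f x))"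
  by (induction S rule: infinite_finite_induct) (auto simp: msubst_add)

lemma msubst_single: "msubst \<sigma> (sg m a) = mconst a * mono \<sigma> m"
  by (simp add: msubst_def mono_def)

lemma poly_expand: "p = (\<Sum>m\<in>ks p. sg m (lk p m))"
  by (rule poly_mapping_eqI) (auto simp: lookup_sum lookup_single when_def in_keys_iff
      intro: sum.neutral split: if_splits)

lemma msubst_mult_single: "msubst \<sigma> (sg m a * sg m' b) = msubst \<sigma> (sg m a) * msubst \<sigma> (sg m' b)"
  by (simp add: mult_single msubst_single mono_add mconst_mult algebra_simps)

lemma msubst_mult: "msubst \<sigma> (p * q) = msubst \<sigma> p * msubst \<sigma> q"
proof -
  have "p * q = (\<Sum>m\<in>ks p. \<Sum>m'\<in>ks q. sg m (lk p m) * sg m' (lk q m'))"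
    by (subst poly_expand[of p], subst poly_expand[of q]) (simp add: sum_product)
  then have "msubst \<sigma> (p * q) = (\<Sum>m\<in>ks p. \<Sum>m'\<in>ks q. msubst \<sigma> (sg m (lk p m)) * msubst \<sigma> (sg m' (lk q m')))"
    by (simp add: msubst_sum msubst_mult_single)
  also have "\<dots> = msubst \<sigma> (\<Sum>m\<in>ks p. sg m (lk p m)) * msubst \<sigma> (\<Sum>m'\<in>ks q. sg m' (lk q m'))"
    by (simp add: msubst_sum sum_product)
  also have "\<dots> = msubst \<sigma> p * msubst \<sigma> q" by (simp only: poly_expand[symmetric])
  finally show ?thesis .
qed

lemma msubst_mconst[simp]: "msubst \<sigma> (mconst a) = mconst a"
  by (simp add: mconst_def msubst_single)

lemma msubst_1[simp]: "msubst \<sigma> 1 = 1"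
  using msubst_mconst[of \<sigma> 1] by simp

lemma msubst_power: "msubst \<sigma> (p ^ k) = msubst \<sigma> p ^ k"
  by (induction k) (auto simp: msubst_mult)

lemma msubst_prod: "msubst \<sigma> (prod f S) = (\<Prod>x\<in>S. msubst \<sigma> (f x))"
  by (induction S rule: infinite_finite_induct) (auto simp: msubst_mult)

lemma msubst_mvar[simp]: "msubst \<sigma> (mvar i) = \<sigma> i"
  by (simp add: mvar_def msubst_single mono_def)



lemma sum_closed: "P 0 \<Longrightarrow> (\<And>x y. P x \<Longrightarrow> P y \<Longrightarrow> P (x + y)) \<Longrightarrow> (\<And>i. i \<in> S \<Longrightarrow> P (f i)) \<Longrightarrow> P (sum f S)"
  by (induction S rule: infinite_finite_induct) auto

lemma prod_closed: "P 1 \<Longrightarrow> (\<And>x y. P x \<Longrightarrow> P y \<Longrightarrow> P (x * y)) \<Longrightarrow> (\<And>i. i \<in> S \<Longrightarrow> P (f i)) \<Longrightarrow> P (prod f S)"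
  by (induction S rule: infinite_finite_induct) auto

lemma power_closed: "P 1 \<Longrightarrow> (\<And>x y. P x \<Longrightarrow> P y \<Longrightarrow> P (x * y)) \<Longrightarrow> P x \<Longrightarrow> P (x ^ k)"
  by (induction k) auto

lemma mvar_power: "mvar i ^ e = (sg (sg i e) 1 :: 'a::comm_ring_1 mpoly)"
  by (induction e) (auto simp: mvar_def mult_single single_add[symmetric])

lemma prod_single_1: "(\<Prod>k\<in>S. sg (f k) (1::'a::comm_ring_1)) = sg (\<Sum>k\<in>S. f k) 1"
  by (induction S rule: infinite_finite_induct) (auto simp: mult_single)

lemma mono_mvar: "mono mvar m = (sg m 1 :: 'a::comm_ring_1 mpoly)"
proof -
  have "mono mvar m = (\<Prod>k\<in>ks m. sg (sg k (lk m k)) (1::'a))"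
    by (simp add: mono_def mvar_power)
  also have "\<dots> = sg (\<Sum>k\<in>ks m. sg k (lk m k)) 1" by (rule prod_single_1)
  also have "\<dots> = sg m 1" by (simp only: poly_expand[symmetric])
  finally show ?thesis .
qed

lemma msubst_id: "msubst mvar p = p"
proof -
  have "msubst mvar p = (\<Sum>m\<in>ks p. sg m (lk p m))"
    by (simp add: msubst_mono mono_mvar mconst_def mult_single)
  also have "\<dots> = p" by (simp only: poly_expand[symmetric])
  finally show ?thesis .
qed

lemma polys_in_iff: "p \<in> polys_in V \<longleftrightarrow> (\<forall>m\<in>ks p. ks m \<subseteq> V)"
  by (auto simp: polys_in_def mvars_def)

lemma polys_in_mono: "p \<in> polys_in V \<Longrightarrow> V \<subseteq> W \<Longrightarrow> p \<in> polys_in W"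
  by (auto simp: polys_in_iff)

lemma polys_in_add: "p \<in> polys_in V \<Longrightarrow> q \<in> polys_in V \<Longrightarrow> p + q \<in> polys_in V"
  unfolding polys_in_iff
proof
  fix m assume "\<forall>m\<in>ks p. ks m \<subseteq> V" "\<forall>m\<in>ks q. ks m \<subseteq> V" "m \<in> ks (p + q)"
  moreover have "m \<in> ks p \<or> m \<in> ks q" using keys_add[of p q] \<open>m \<in> ks (p + q)\<close> by auto
  ultimately show "ks m \<subseteq> V" by auto
qed

lemma polys_in_mult:
  fixes p q :: "'a::comm_ring_1 mpoly"
  shows "p \<in> polys_in V \<Longrightarrow> q \<in> polys_in V \<Longrightarrow> p * q \<in> polys_in V"
  unfolding polys_in_iff
proof
  fix m assume p: "\<forall>m\<in>ks p. ks m \<subseteq> V" and q: "\<forall>m\<in>ks q. ks m \<subseteq> V" and m: "m \<in> ks (p * q)"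
  then obtain a b where "a \<in> ks p" "b \<in> ks q" "m = a + b" using keys_mult by blast
  moreover have "ks (a + b) \<subseteq> ks a \<union> ks b" by (rule keys_add)
  ultimately show "ks m \<subseteq> V" using p q by auto
qed

lemma polys_in_mconst: "mconst a \<in> polys_in V"
  by (simp add: polys_in_iff mconst_def)

lemma polys_in_0: "0 \<in> polys_in V"
  by (simp add: polys_in_iff)

lemma polys_in_1: "1 \<in> polys_in V"
  by (simp add: polys_in_iff)

lemma polys_in_mvar: "i \<in> V \<Longrightarrow> mvar i \<in> polys_in V"
  by (simp add: polys_in_iff mvar_def)

lemma polys_in_uminus: "p \<in> polys_in V \<Longrightarrow> - p \<in> polys_in V"
  by (simp add: polys_in_iff keys_minus)

lemma polys_in_diff: "(p::'a::ab_group_add mpoly) \<in> polys_in V \<Longrightarrow> q \<in> polys_in V \<Longrightarrow> p - q \<in> polys_in (V::nat set)"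
  using polys_in_add[of p V "-q"] polys_in_uminus[of q V] by simp

lemma polys_in_sum: "(\<And>i. i \<in> S \<Longrightarrow> f i \<in> polys_in V) \<Longrightarrow> sum f S \<in> polys_in V"
  by (rule sum_closed) (auto intro: polys_in_0 polys_in_add)

lemma polys_in_power: "(p::'a::comm_ring_1 mpoly) \<in> polys_in V \<Longrightarrow> p ^ k \<in> polys_in V"
  by (rule power_closed) (auto intro: polys_in_1 polys_in_mult)

lemma polys_in_UNIV: "p \<in> polys_in UNIV"
  by (simp add: polys_in_def)

lemma poly_induct_in [consumes 1, case_names const var add mult]:
  fixes p :: "'a::comm_ring_1 mpoly"
  assumes "p \<in> polys_in V" "\<And>a. P (mconst a)" "\<And>i. i \<in> V \<Longrightarrow> P (mvar i)"
    "\<And>p q. P p \<Longrightarrow> P q \<Longrightarrow> P (p + q)" "\<And>p q. P p \<Longrightarrow> P q \<Longrightarrow> P (p * q)"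
  shows "P p"
proof -
  have P0: "P 0" using assms(2)[of 0] by simp
  have P1: "P 1" using assms(2)[of 1] by simp
  have "P (msubst mvar p)"
    unfolding msubst_mono
  proof (rule sum_closed[where P=P, OF P0 assms(4)])
    fix m assume m: "m \<in> ks p"
    have "P (mono mvar m)" unfolding mono_def
    proof (rule prod_closed[where P=P, OF P1 assms(5)])
      fix i assume "i \<in> ks m"
      then have "i \<in> V" using assms(1) m by (auto simp: polys_in_iff)
      then show "P (mvar i ^ lk m i)" by (intro power_closed[where P=P, OF P1 assms(5) assms(3)])
    qed
    then show "P (mconst (lk p m) * mono mvar m)" by (intro assms(5) assms(2))
  qed
  then show ?thesis by (simp add: msubst_id)
qed

lemma msubst_cong:
  "p \<in> polys_in V \<Longrightarrow> (\<And>i. i \<in> V \<Longrightarrow> \<sigma> i = \<tau> i) \<Longrightarrow> msubst \<sigma> p = msubst \<tau> p"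
  by (induction p rule: poly_induct_in) (auto simp: msubst_add msubst_mult)

lemma msubst_in:
  "p \<in> polys_in V \<Longrightarrow> (\<And>i. i \<in> V \<Longrightarrow> \<sigma> i \<in> polys_in W) \<Longrightarrow> msubst \<sigma> p \<in> polys_in W"
  by (induction p rule: poly_induct_in) (auto simp: msubst_add msubst_mult intro: polys_in_mconst polys_in_add polys_in_mult)

lemma msubst_msubst: "msubst \<sigma> (msubst \<tau> p) = msubst (\<lambda>i. msubst \<sigma> (\<tau> i)) p"
  using polys_in_UNIV[of p]
  by (induction p rule: poly_induct_in) (auto simp: msubst_add msubst_mult)



definition D :: "nat \<Rightarrow> 'a::comm_ring_1 mpoly \<Rightarrow> 'a mpoly" where
  "D i p = (\<Sum>m\<in>ks p. sg (m - sg i 1) (of_nat (lk m i) * lk p m))"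

lemma D_superset:
  assumes "finite S" "ks p \<subseteq> S"
  shows "D i p = (\<Sum>m\<in>S. sg (m - sg i 1) (of_nat (lk m i) * lk p m))"
  unfolding D_def
  by (rule sum.mono_neutral_left) (use assms in \<open>auto simp: in_keys_iff\<close>)

lemma D_0[simp]: "D i 0 = 0" by (simp add: D_def)

lemma D_add: "D i (p + q) = D i p + D i q"
proof -
  let ?S = "ks p \<union> ks q"
  have f: "finite ?S" by simp
  have "D i (p + q) = (\<Sum>m\<in>?S. sg (m - sg i 1) (of_nat (lk m i) * lk (p + q) m))"
    by (rule D_superset[OF f]) (rule keys_add)
  also have "\<dots> = D i p + D i q"
    by (simp add: lookup_add distrib_left single_add sum.distrib D_superset[OF f])
  finally show ?thesis .
qed

lemma D_sum: "D i (sum f S) = (\<Sum>x\<in>S. D i (f x))"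
  by (induction S rule: infinite_finite_induct) (auto simp: D_add)

lemma D_single: "D i (sg m a) = sg (m - sg i 1) (of_nat (lk m i) * a)"
  by (simp add: D_def)

lemma D_uminus: "D i (- p) = - D i p"
  using D_add[of i p "-p"] by (metis add.right_inverse D_0 minus_unique)

lemma D_diff: "D i (p - q) = D i p - D i q"
  using D_add[of i p "-q"] by (simp add: D_uminus)

lemma D_mconst[simp]: "D i (mconst a) = 0"
  by (simp add: mconst_def D_single)

lemma D_mvar: "D i (mvar j) = (if i = j then 1 else 0)"
  by (simp add: mvar_def D_single lookup_single)

lemma mono_sub_add:
  assumes "0 < lk m i"
  shows "m - sg i 1 + m' = m + m' - sg i (1::nat)"
  by (rule poly_mapping_eqI) (use assms in \<open>auto simp: lookup_add lookup_minus lookup_single when_def\<close>)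

lemma mono_sub_add_cancel:
  assumes "0 < lk m i"
  shows "m - sg i 1 + sg i (1::nat) = m"
  by (rule poly_mapping_eqI) (use assms in \<open>auto simp: lookup_add lookup_minus lookup_single when_def\<close>)

lemma sg_sub_add: "sg (m - sg i 1 + m') (of_nat (lk m i) * c) = sg (m + m' - sg i 1) (of_nat (lk m i) * (c::'a::comm_ring_1))"
proof (cases "lk m i = 0")
  case False
  then have "m - sg i 1 + m' = m + m' - sg i (1::nat)" by (intro mono_sub_add) simp
  then show ?thesis by simp
qed simp

lemma D_mult_single:
  fixes a b :: "'a::comm_ring_1"
  shows "D i (sg m a * sg m' b) = D i (sg m a) * sg m' b + sg m a * D i (sg m' b)"
proof -
  have "D i (sg m a) * sg m' b = sg (m + m' - sg i 1) (of_nat (lk m i) * (a * b))"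
    using sg_sub_add[of m i m' "a * b"] by (simp add: D_single mult_single ac_simps)
  moreover have "sg m a * D i (sg m' b) = sg (m + m' - sg i 1) (of_nat (lk m' i) * (a * b))"
    using sg_sub_add[of m' i m "a * b"] by (simp add: D_single mult_single ac_simps)
  ultimately show ?thesis
    by (simp add: D_single mult_single lookup_add single_add[symmetric] distrib_right)
qed

lemma D_mult: "D i (p * q) = D i p * q + p * D i q"
proof -
  have e: "p * q = (\<Sum>m\<in>ks p. \<Sum>m'\<in>ks q. sg m (lk p m) * sg m' (lk q m'))"
    by (subst poly_expand[of p], subst poly_expand[of q]) (simp add: sum_product)
  have "D i (p * q) = (\<Sum>m\<in>ks p. \<Sum>m'\<in>ks q. D i (sg m (lk p m)) * sg m' (lk q m') + sg m (lk p m) * D i (sg m' (lk q m')))"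
    by (simp add: e D_sum D_mult_single)
  also have "\<dots> = D i (\<Sum>m\<in>ks p. sg m (lk p m)) * (\<Sum>m'\<in>ks q. sg m' (lk q m')) + (\<Sum>m\<in>ks p. sg m (lk p m)) * D i (\<Sum>m'\<in>ks q. sg m' (lk q m'))"
    by (simp add: D_sum sum_product sum.distrib)
  also have "\<dots> = D i p * q + p * D i q" by (simp only: poly_expand[symmetric])
  finally show ?thesis .
qed

lemma chain_rule:
  assumes "p \<in> polys_in V" "finite V"
  shows "D i (msubst \<sigma> p) = (\<Sum>j\<in>V. msubst \<sigma> (D j p) * D i (\<sigma> j))"
  using assms(1)
proof (induction p rule: poly_induct_in)
  case (const a)
  then show ?case by simp
next
  case (var k)
  have "(\<Sum>j\<in>V. msubst \<sigma> (D j (mvar k)) * D i (\<sigma> j)) = (\<Sum>j\<in>V. if j = k then D i (\<sigma> j) else 0)"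
    by (rule sum.cong) (auto simp: D_mvar)
  then show ?case using var assms(2) by simp
next
  case (add p q)
  then show ?case by (simp add: msubst_add D_add distrib_right sum.distrib)
next
  case (mult p q)
  then show ?case
    by (simp add: msubst_mult D_mult msubst_add distrib_right distrib_left sum.distrib sum_distrib_left sum_distrib_right ac_simps)
qed

lemma keys_D: "m \<in> ks (D i p) \<Longrightarrow> \<exists>m'\<in>ks p. 0 < lk m' i \<and> m = m' - sg i 1"
proof -
  assume m: "m \<in> ks (D i p)"
  have "ks (D i p) \<subseteq> (\<Union>m'\<in>ks p. ks (sg (m' - sg i 1) (of_nat (lk m' i) * lk p m')))"
    unfolding D_def by (rule keys_sum)
  with m obtain m' where "m' \<in> ks p" "m \<in> ks (sg (m' - sg i 1) (of_nat (lk m' i) * lk p m'))" by blast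
  then show ?thesis by (cases "lk m' i = 0") (auto split: if_splits)
qed

lemma keys_sub: "ks (m - sg i (1::nat)) \<subseteq> ks m"
  by (auto simp: in_keys_iff lookup_minus)

lemma D_in: "p \<in> polys_in V \<Longrightarrow> D i p \<in> polys_in V"
  unfolding polys_in_iff
proof (intro ballI impI)
  fix m assume p: "\<forall>m\<in>ks p. ks m \<subseteq> V" and m: "m \<in> ks (D i p)"
  then obtain m' where "m' \<in> ks p" "m = m' - sg i 1" using keys_D by blast
  then show "ks m \<subseteq> V" using p keys_sub[of m' i] by blast
qed

lemma lookup_D:
  fixes p :: "'a::comm_ring_1 mpoly"
  assumes m: "m \<in> ks p" and mi: "0 < lk m i"
  shows "lk (D i p) (m - sg i 1) = of_nat (lk m i) * lk p m"
proof -
  have "lk (D i p) (m - sg i 1) = (\<Sum>m'\<in>ks p. lk (sg (m' - sg i 1) (of_nat (lk m' i) * lk p m')) (m - sg i 1))"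
    unfolding D_def lookup_sum ..
  also have "\<dots> = lk (sg (m - sg i 1) (of_nat (lk m i) * lk p m)) (m - sg i 1) +
     (\<Sum>m'\<in>ks p - {m}. lk (sg (m' - sg i 1) (of_nat (lk m' i) * lk p m')) (m - sg i 1))"
    by (rule sum.remove) (use m in auto)
  also have "(\<Sum>m'\<in>ks p - {m}. lk (sg (m' - sg i 1) (of_nat (lk m' i) * lk p m')) (m - sg i 1)) = 0"
  proof (rule sum.neutral, rule ballI)
    fix m' assume "m' \<in> ks p - {m}"
    then have "m' \<noteq> m" by auto
    show "lk (sg (m' - sg i 1) (of_nat (lk m' i) * lk p m')) (m - sg i 1) = 0"
    proof (cases "lk m' i = 0")
      case False
      have "m' - sg i 1 \<noteq> m - sg i 1"
      proof
        assume "m' - sg i 1 = m - sg i 1"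
        then have "m' - sg i 1 + sg i 1 = m - sg i 1 + sg i 1" by simp
        then show False using mono_sub_add_cancel[of m' i] mono_sub_add_cancel[of m i] mi False \<open>m' \<noteq> m\<close> by simp
      qed
      then show ?thesis by (simp add: lookup_single)
    qed simp
  qed
  finally show ?thesis by simp
qed


definition tdeg :: "nat \<Rightarrow> (nat \<Rightarrow>\<^sub>0 nat) \<Rightarrow> nat" where
  "tdeg n m = (\<Sum>k<n. lk m k)"

lemma tdeg_sub: "j < n \<Longrightarrow> 0 < lk m j \<Longrightarrow> tdeg n (m - sg j 1) + 1 = tdeg n m"
proof -
  assume j: "j < n" and mj: "0 < lk m j"
  have "tdeg n m = lk m j + (\<Sum>k\<in>{..<n} - {j}. lk m k)"
    unfolding tdeg_def using j by (simp add: sum.remove)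
  moreover have "tdeg n (m - sg j 1) = lk (m - sg j 1) j + (\<Sum>k\<in>{..<n} - {j}. lk (m - sg j 1) k)"
    unfolding tdeg_def using j by (simp add: sum.remove)
  moreover have "(\<Sum>k\<in>{..<n} - {j}. lk (m - sg j 1) k) = (\<Sum>k\<in>{..<n} - {j}. lk m k)"
    by (rule sum.cong) (auto simp: lookup_minus lookup_single)
  ultimately show ?thesis using mj by (simp add: lookup_minus)
qed



lemma mult_entry:
  assumes "A \<in> carrier_mat n n" "B \<in> carrier_mat n n" "i < n" "j < n"
  shows "(A * B) $$ (i,j) = (\<Sum>k<n. A $$ (i,k) * B $$ (k,j))"
  using assms by (auto simp: scalar_prod_def atLeast0LessThan intro: sum.cong)

lemma left_inv_kernel:
  fixes A B :: "'a::idom mat" and v :: "nat \<Rightarrow> 'a"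
  assumes A: "A \<in> carrier_mat n n" and B: "B \<in> carrier_mat n n" and AB: "A * B = 1\<^sub>m n"
    and v: "\<And>i. i < n \<Longrightarrow> (\<Sum>j<n. v j * B $$ (j,i)) = 0" and l: "l < n"
  shows "v l = 0"
proof -
  have "det A * det B = 1" using det_mult[OF A B] AB by simp
  then have dB: "det B \<noteq> 0" by auto
  let ?C = "adj_mat B"
  have C: "?C \<in> carrier_mat n n" and BC: "B * ?C = det B \<cdot>\<^sub>m 1\<^sub>m n" using adj_mat[OF B] by auto
  have "v l * det B = (\<Sum>j<n. v j * (B * ?C) $$ (j,l))"
  proof -
    have "(\<Sum>j<n. v j * (B * ?C) $$ (j,l)) = (\<Sum>j<n. if j = l then v j * det B else 0)"
      by (rule sum.cong) (use l in \<open>auto simp: BC\<close>)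
    then show ?thesis using l by simp
  qed
  also have "\<dots> = (\<Sum>j<n. \<Sum>i<n. v j * (B $$ (j,i) * ?C $$ (i,l)))"
    by (rule sum.cong) (auto simp: mult_entry[OF B C _ l] sum_distrib_left)
  also have "\<dots> = (\<Sum>i<n. (\<Sum>j<n. v j * B $$ (j,i)) * ?C $$ (i,l))"
    by (subst sum.swap) (simp add: sum_distrib_right mult.assoc)
  also have "\<dots> = 0" by (simp add: v)
  finally show ?thesis using dB by simp
qed

locale coordsys =
  fixes n :: nat and ys q :: "nat \<Rightarrow> 'a::field_char_0 mpoly"
  assumes ys_in: "\<And>i. i < n \<Longrightarrow> ys i \<in> polys_in {..<n}"
    and q_in: "\<And>i. i < n \<Longrightarrow> q i \<in> polys_in {..<n}"
    and q_inv: "\<And>i. i < n \<Longrightarrow> msubst ys (q i) = mvar i"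
    and n_pos: "0 < n"
begin

definition AM where "AM = mat n n (\<lambda>(k,j). msubst ys (D j (q k)))"
definition BM where "BM = mat n n (\<lambda>(j,i). D i (ys j))"

lemma AB: "AM * BM = 1\<^sub>m n"
proof (rule eq_matI)
  fix k i assume k: "k < dim_row (1\<^sub>m n)" and i: "i < dim_col (1\<^sub>m n)"
  then have kn: "k < n" and "i < n" by auto
  have "(AM * BM) $$ (k,i) = (\<Sum>j<n. msubst ys (D j (q k)) * D i (ys j))"
    using kn \<open>i < n\<close> by (subst mult_entry[of AM n BM]) (auto simp: AM_def BM_def)
  also have "\<dots> = D i (msubst ys (q k))"
    by (rule chain_rule[symmetric]) (use q_in[OF kn] in auto)
  also have "\<dots> = (if i = k then 1 else 0)" by (simp add: q_inv[OF kn] D_mvar)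
  finally show "(AM * BM) $$ (k,i) = 1\<^sub>m n $$ (k,i)" using kn \<open>i < n\<close> by auto
qed (auto simp: AM_def BM_def)

lemma D_kernel:
  assumes F: "F \<in> polys_in {..<n}" and F0: "msubst ys F = 0" and j: "j < n"
  shows "msubst ys (D j F) = 0"
proof (rule left_inv_kernel[of AM n BM "\<lambda>j. msubst ys (D j F)", OF _ _ AB _ j])
  fix i assume i: "i < n"
  have "(\<Sum>j<n. msubst ys (D j F) * BM $$ (j, i)) = (\<Sum>j<n. msubst ys (D j F) * D i (ys j))"
    by (rule sum.cong) (use i in \<open>auto simp: BM_def\<close>)
  also have "\<dots> = D i (msubst ys F)" by (rule chain_rule[symmetric]) (use F in auto)
  also have "\<dots> = 0" by (simp add: F0)
  finally show "(\<Sum>j<n. msubst ys (D j F) * BM $$ (j, i)) = 0" .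
qed (auto simp: AM_def BM_def)

lemma injective_aux:
  "\<forall>F. F \<in> polys_in {..<n} \<and> (\<forall>m\<in>ks F. tdeg n m < N) \<and> msubst ys F = 0 \<longrightarrow> F = 0"
proof (induction N)
  case 0
  then show ?case by auto
next
  case (Suc N)
  show ?case
  proof (intro allI impI, elim conjE)
    fix F assume F: "F \<in> polys_in {..<n}" and deg: "\<forall>m\<in>ks F. tdeg n m < Suc N" and F0: "msubst ys F = 0"
    have DF: "D j F = 0" if j: "j < n" for j
    proof -
      have "\<forall>m\<in>ks (D j F). tdeg n m < N"
      proof
        fix m assume "m \<in> ks (D j F)"
        then obtain m' where m': "m' \<in> ks F" "0 < lk m' j" "m = m' - sg j 1" using keys_D by blast
        then show "tdeg n m < N" using tdeg_sub[OF j m'(2)] deg by fastforce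
      qed
      then show ?thesis using Suc.IH D_in[OF F] D_kernel[OF F F0 j] by blast
    qed
    have keys0: "ks F \<subseteq> {0}"
    proof
      fix m assume m: "m \<in> ks F"
      show "m \<in> {0}"
      proof (rule ccontr)
        assume "m \<notin> {0}"
        then have "ks m \<noteq> {}" by auto
        then obtain j where jm: "j \<in> ks m" by blast
        then have jn: "j < n" using F m by (auto simp: polys_in_iff)
        have mj: "0 < lk m j" using jm by (simp add: in_keys_iff)
        have "lk (D j F) (m - sg j 1) = of_nat (lk m j) * lk F m" by (rule lookup_D[OF m mj])
        moreover have "lk F m \<noteq> 0" using m by (simp add: in_keys_iff)
        ultimately have "D j F \<noteq> 0" using mj by auto
        then show False using DF[OF jn] by simp
      qed
    qed
    have "F = sg 0 (lk F 0)"
      by (rule poly_mapping_eqI) (use keys0 in \<open>auto simp: lookup_single when_def in_keys_iff\<close>)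
    then have "F = mconst (lk F 0)" by (simp add: mconst_def)
    then have "msubst ys F = F" by (metis msubst_mconst)
    then show "F = 0" using F0 by simp
  qed
qed

lemma injective:
  assumes "F \<in> polys_in {..<n}" "msubst ys F = 0"
  shows "F = 0"
proof -
  let ?N = "Suc (Max (insert 0 (tdeg n ` ks F)))"
  have "\<forall>m\<in>ks F. tdeg n m < ?N" by (auto simp: less_Suc_eq_le)
  then show ?thesis using injective_aux[of ?N] assms by blast
qed

lemma right_inv: "msubst q (ys 0) = mvar 0"
proof -
  have n: "0 < n" by (rule n_pos)
  have "msubst ys (msubst q (ys 0)) = msubst (\<lambda>i. msubst ys (q i)) (ys 0)" by (rule msubst_msubst)
  also have "\<dots> = msubst mvar (ys 0)"
    by (rule msubst_cong[OF ys_in[OF n]]) (simp add: q_inv)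
  also have "\<dots> = msubst ys (mvar 0)" by (simp add: msubst_id)
  finally have "msubst ys (msubst q (ys 0) - mvar 0) = 0" by (simp add: msubst_diff)
  moreover have "msubst q (ys 0) - mvar 0 \<in> polys_in {..<n}"
    by (intro polys_in_diff msubst_in[OF ys_in[OF n]] q_in polys_in_mvar) (use n in auto)
  ultimately show ?thesis using injective by fastforce
qed

end


lemma ucomp_superset:
  assumes "degree l \<le> N"
  shows "ucomp l y = (\<Sum>k\<le>N. mconst (coeff l k) * y ^ k)"
  unfolding ucomp_def
  by (rule sum.mono_neutral_left) (use assms in \<open>auto simp: coeff_eq_0\<close>)

lemma ucomp_0[simp]: "ucomp 0 y = 0"
  by (simp add: ucomp_def)

lemma ucomp_add: "ucomp (l1 + l2) y = ucomp l1 y + ucomp l2 y"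
proof -
  let ?N = "max (degree l1) (degree l2)"
  have "ucomp (l1 + l2) y = (\<Sum>k\<le>?N. mconst (coeff (l1 + l2) k) * y ^ k)"
    by (rule ucomp_superset) (rule degree_add_le; simp)
  also have "\<dots> = (\<Sum>k\<le>?N. mconst (coeff l1 k) * y ^ k) + (\<Sum>k\<le>?N. mconst (coeff l2 k) * y ^ k)"
    by (simp add: mconst_add distrib_right sum.distrib)
  also have "\<dots> = ucomp l1 y + ucomp l2 y"
    by (simp add: ucomp_superset[symmetric])
  finally show ?thesis .
qed

lemma ucomp_sum: "ucomp (sum f S) y = (\<Sum>x\<in>S. ucomp (f x) y)"
  by (induction S rule: infinite_finite_induct) (auto simp: ucomp_add)

lemma ucomp_monom: "ucomp (monom a k) y = mconst a * y ^ k"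
proof -
  have "ucomp (monom a k) y = (\<Sum>j\<le>k. mconst (coeff (monom a k) j) * y ^ j)"
    by (rule ucomp_superset) (rule degree_monom_le)
  also have "\<dots> = (\<Sum>j\<le>k. if j = k then mconst a * y ^ k else 0)"
    by (rule sum.cong) (auto simp: coeff_monom)
  also have "\<dots> = mconst a * y ^ k" by simp
  finally show ?thesis .
qed

lemma mono_rho:
  "mono (\<lambda>i. if i = 0 then y else 0) m = (if ks m \<subseteq> {0} then y ^ lk m 0 else (0::'a::comm_ring_1 mpoly))"
proof (cases "ks m \<subseteq> {0}")
  case True
  then have "mono (\<lambda>i. if i = 0 then y else 0) m = (\<Prod>i\<in>{0}. (if i = 0 then y else 0) ^ lk m i)"
    by (intro mono_superset) auto
  then show ?thesis using True by simp
next
  case False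
  then obtain i where i: "i \<in> ks m" "i \<noteq> 0" by auto
  then have "lk m i \<noteq> 0" by (simp add: in_keys_iff)
  then have "(\<Prod>i\<in>ks m. (if i = 0 then y else 0) ^ lk m i) = 0"
    using i by (intro prod_zero) (auto intro!: bexI[of _ i] simp: zero_power)
  then show ?thesis using False by (simp add: mono_def)
qed

lemma ucomp_exists: "\<exists>l. msubst (\<lambda>i. if i = 0 then y else 0) p = ucomp l (y::'a::comm_ring_1 mpoly)"
proof
  let ?l = "\<Sum>m\<in>ks p. (if ks m \<subseteq> {0} then monom (lk p m) (lk m 0) else 0)"
  have "msubst (\<lambda>i. if i = 0 then y else 0) p = (\<Sum>m\<in>ks p. ucomp (if ks m \<subseteq> {0} then monom (lk p m) (lk m 0) else 0) y)"
    unfolding msubst_mono by (rule sum.cong) (auto simp: mono_rho ucomp_monom)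
  also have "\<dots> = ucomp ?l y" by (simp add: ucomp_sum)
  finally show "msubst (\<lambda>i. if i = 0 then y else 0) p = ucomp ?l y" .
qed

lemma shift_in:
  assumes "p \<in> polys_in {..<n}"
  shows "shiftvars n p \<in> polys_in {..<2*n}"
  unfolding shiftvars_def by (rule msubst_in[OF assms]) (auto intro: polys_in_mvar)

lemma ucomp_in: "y \<in> polys_in V \<Longrightarrow> ucomp l y \<in> polys_in V"
  unfolding ucomp_def by (intro polys_in_sum polys_in_mult polys_in_mconst polys_in_power)

theorem proposition4p2:
  fixes c y1 :: "'a::{field_char_0} mpoly" and n :: nat
  assumes "c \<in> polys_in {..<n}" and "y1 \<in> polys_in {..<n}"
    and "c \<notin> range mconst"
  shows "((\<exists>l :: 'a poly. c = ucomp l y1) \<and> is_coordinate n y1) \<longleftrightarrow>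
         ((\<exists>q \<in> polys_in {..<2*n}. c - shiftvars n c = (y1 - shiftvars n y1) * q)
          \<and> is_coordinate n y1)"
proof -
  note c_in = assms(1) and y_in = assms(2)
  let ?z = "shiftvars n y1"
  have fwd: "\<exists>q \<in> polys_in {..<2*n}. c - shiftvars n c = (y1 - ?z) * q" if "c = ucomp l y1" for l
  proof
    let ?S = "\<lambda>k. \<Sum>i<k. ?z ^ (k - Suc i) * y1 ^ i"
    let ?q = "\<Sum>k\<le>degree l. mconst (coeff l k) * ?S k"
    have sc: "shiftvars n c = ucomp l ?z"
      unfolding that ucomp_def shiftvars_def
      by (simp add: msubst_sum msubst_mult msubst_power)
    have "(y1 - ?z) * ?q = (\<Sum>k\<le>degree l. mconst (coeff l k) * ((y1 - ?z) * ?S k))"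
      by (simp add: sum_distrib_left ac_simps)
    also have "\<dots> = (\<Sum>k\<le>degree l. mconst (coeff l k) * y1 ^ k - mconst (coeff l k) * ?z ^ k)"
      by (simp add: power_diff_sumr2[symmetric] right_diff_distrib)
    also have "\<dots> = c - shiftvars n c"
    proof -
      have "c - shiftvars n c = ucomp l y1 - ucomp l ?z" using sc that by simp
      then show ?thesis by (simp add: ucomp_def sum_subtractf)
    qed
    finally show "c - shiftvars n c = (y1 - ?z) * ?q" ..
    have y2: "y1 \<in> polys_in {..<2*n}" by (rule polys_in_mono[OF y_in]) auto
    show "?q \<in> polys_in {..<2*n}"
      by (intro polys_in_sum polys_in_mult polys_in_mconst polys_in_power y2 shift_in[OF y_in])
  qed
  have bwd: "\<exists>l. c = ucomp l y1" if coord: "is_coordinate n y1"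
    and Q: "c - shiftvars n c = (y1 - ?z) * Q" for Q
  proof -
    from coord obtain ys where n: "0 < n" and ys0: "ys 0 = y1" and ys_in: "\<forall>i<n. ys i \<in> polys_in {..<n}"
      and ex: "\<forall>i<n. \<exists>q \<in> polys_in {..<n}. msubst ys q = mvar i"
      unfolding is_coordinate_def by blast
    from ex obtain qf where qf: "\<forall>i<n. qf i \<in> polys_in {..<n} \<and> msubst ys (qf i) = mvar i"
      by metis
    interpret coordsys n ys qf
      by unfold_locales (use ys_in qf n in auto)
    have rinv: "msubst qf y1 = mvar 0" using right_inv ys0 by simp
    define \<rho> where "\<rho> = (\<lambda>i::nat. if i = 0 then y1 else 0)"
    define \<tau> where "\<tau> = (\<lambda>i. if i < n then mvar i else msubst \<rho> (qf (i - n)))"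
    have t_id: "msubst \<tau> p = p" if "p \<in> polys_in {..<n}" for p
    proof -
      have "msubst \<tau> p = msubst mvar p" by (rule msubst_cong[OF that]) (simp add: \<tau>_def)
      then show ?thesis by (simp add: msubst_id)
    qed
    have t_sh: "msubst \<tau> (shiftvars n p) = msubst \<rho> (msubst qf p)" if "p \<in> polys_in {..<n}" for p
    proof -
      have "msubst \<tau> (shiftvars n p) = msubst (\<lambda>i. msubst \<tau> (mvar (n + i))) p"
        unfolding shiftvars_def by (rule msubst_msubst)
      also have "\<dots> = msubst (\<lambda>i. msubst \<rho> (qf i)) p"
        by (rule msubst_cong[OF that]) (simp add: \<tau>_def)
      also have "\<dots> = msubst \<rho> (msubst qf p)" by (simp add: msubst_msubst)
      finally show ?thesis .
    qed
    have "msubst \<tau> (c - shiftvars n c) = msubst \<tau> ((y1 - ?z) * Q)" using Q by simp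
    then have "c - msubst \<rho> (msubst qf c) = (y1 - msubst \<rho> (msubst qf y1)) * msubst \<tau> Q"
      by (simp add: msubst_diff msubst_mult t_id[OF c_in] t_id[OF y_in] t_sh[OF c_in] t_sh[OF y_in])
    also have "\<dots> = 0" by (simp add: rinv \<rho>_def)
    finally have "c = msubst \<rho> (msubst qf c)" by simp
    moreover obtain l where "msubst \<rho> (msubst qf c) = ucomp l y1"
      using ucomp_exists[of y1 "msubst qf c"] unfolding \<rho>_def by blast
    ultimately show ?thesis by (intro exI[of _ l]) simp
  qed
  show ?thesis using fwd bwd by blast
qed


end
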